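(* Let $H=([n],E)$ be a hypergraph and $F\ne F'$ two edges. If $F\cap F'=\emptyset$ then $Q_F\cap Q_{F'}$ is homeomorphic to a sphere of dimension $n-\#F-\#F'$; if $F\cap F'\ne\emptyset$ then $Q_F\cap Q_{F'}$ is homeomorphic to a sphere of dimension $n-\#(F\cup F')-1$. In particular, $Q_F\cap Q_{F'}$ has no nonempty face if and only if $F\cup F'=[n]$ and $F\cap F'\neq\emptyset$.
   Context: A hypergraph $H=([n],E)$ has edges that are nonempty subsets of $[n]$; standing assumptions: every vertex in some edge, no edge of size 1, no edge properly contained in another. The coloring complex $\Delta_H$ has as faces the ordered set partitions $B_1|\cdots|B_r$ of $[n]$ into nonempty blocks (of dimension $r-2$) with at least one block containing an edge; a face is contained in another if it is obtained from it by repeatedly merging adjacent blocks. For $F\in E$, the edge sphere $Q_F$ is the subcomplex of faces having a block containing $F$. A sphere of dimension $-1$ means the empty space (only the empty face). *)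

theory Defs
  imports "HOL-Analysis.Analysis"
begin

definition hypergraph :: "nat \<Rightarrow> nat set set \<Rightarrow> bool" where
  "hypergraph n E \<longleftrightarrow>
     (\<forall>e\<in>E. e \<noteq> {} \<and> e \<subseteq> {1..n}) \<and>
     \<Union>E = {1..n} \<and>
     (\<forall>e\<in>E. card e \<noteq> 1) \<and>
     (\<forall>e\<in>E. \<forall>e'\<in>E. \<not> (e \<subset> e'))"

definition ordered_set_partition :: "nat \<Rightarrow> nat set list \<Rightarrow> bool" where
  "ordered_set_partition n bs \<longleftrightarrow>
     (\<forall>B\<in>set bs. B \<noteq> {}) \<and>
     (\<forall>i<length bs. \<forall>j<length bs. i \<noteq> j \<longrightarrow> bs ! i \<inter> bs ! j = {}) \<and>
     \<Union>(set bs) = {1..n}"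

definition coloring_complex :: "nat \<Rightarrow> nat set set \<Rightarrow> nat set list set" where
  "coloring_complex n E =
     {bs. ordered_set_partition n bs \<and> (\<exists>B\<in>set bs. \<exists>e\<in>E. e \<subseteq> B)}"

definition edge_sphere :: "nat \<Rightarrow> nat set set \<Rightarrow> nat set \<Rightarrow> nat set list set" where
  "edge_sphere n E F = {bs \<in> coloring_complex n E. \<exists>B\<in>set bs. F \<subseteq> B}"

text \<open>Geometric realization: the face B_1|...|B_r is realized as the relatively open
  spherical cell of the braid arrangement (Coxeter complex of type A_{n-1}):
  unit vectors x in the hyperplane sum x_i = 0 of R^[n] (coordinates outside [n] are 0)
  that are constant on each block and strictly increasing from block to block.
  This cell has dimension r-2; the one-block partition (the empty face) has empty cell.\<close>
definition face_cell :: "nat \<Rightarrow> nat set list \<Rightarrow> (nat \<Rightarrow> real) set" where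
  "face_cell n bs =
     {x. (\<forall>i. i \<notin> {1..n} \<longrightarrow> x i = 0) \<and>
         (\<Sum>i\<in>{1..n}. x i) = 0 \<and>
         (\<Sum>i\<in>{1..n}. x i ^ 2) = 1 \<and>
         (\<forall>k<length bs. \<forall>i\<in>bs ! k. \<forall>j\<in>bs ! k. x i = x j) \<and>
         (\<forall>k<length bs. \<forall>l<length bs. k < l \<longrightarrow>
             (\<forall>i\<in>bs ! k. \<forall>j\<in>bs ! l. x i < x j))}"

definition realization :: "nat \<Rightarrow> nat set list set \<Rightarrow> (nat \<Rightarrow> real) set" where
  "realization n K = (\<Union>bs\<in>K. face_cell n bs)"

definition is_sphere_of_dim :: "(nat \<Rightarrow> real) set \<Rightarrow> int \<Rightarrow> bool" where
  "is_sphere_of_dim S d \<longleftrightarrow>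
     (d = -1 \<and> S = {}) \<or>
     (d \<ge> 0 \<and> subtopology (powertop_real UNIV) S homeomorphic_space nsphere (nat d))"

end

theory Submission imports Defs begin


lemma sphere_homeo:
  fixes f g :: "(nat \<Rightarrow> real) \<Rightarrow> (nat \<Rightarrow> real)" and U :: "(nat\<Rightarrow>real) set"
    and I :: "nat set" and d :: nat
  assumes fin: "finite I"
    and cf: "\<And>i. continuous_map (powertop_real UNIV) euclideanreal (\<lambda>x. f x i)"
    and cg: "\<And>i. continuous_map (powertop_real UNIV) euclideanreal (\<lambda>x. g x i)"
    and fh: "\<And>x c. c > 0 \<Longrightarrow> f (\<lambda>i. c * x i) = (\<lambda>i. c * f x i)"
    and gh: "\<And>x c. c > 0 \<Longrightarrow> g (\<lambda>i. c * x i) = (\<lambda>i. c * g x i)"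
    and Uc: "\<And>x c. x \<in> U \<Longrightarrow> c > 0 \<Longrightarrow> (\<lambda>i. c * x i) \<in> U"
    and Usupp: "\<And>x i. x \<in> U \<Longrightarrow> i \<notin> I \<Longrightarrow> x i = 0"
    and fW: "\<And>x i. x \<in> U \<Longrightarrow> i > d \<Longrightarrow> f x i = 0"
    and gf: "\<And>x. x \<in> U \<Longrightarrow> g (f x) = x"
    and gU: "\<And>y. \<forall>i>d. y i = 0 \<Longrightarrow> g y \<in> U"
    and fg: "\<And>y. \<forall>i>d. y i = 0 \<Longrightarrow> f (g y) = y"
  shows "subtopology (powertop_real UNIV) {x\<in>U. (\<Sum>i\<in>I. x i ^ 2) = 1} homeomorphic_space nsphere d"
proof -
  have g0: "g (\<lambda>i. 0) = (\<lambda>i. 0)"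
  proof -
    have "g (\<lambda>i. 2 * (\<lambda>i. 0) i) = (\<lambda>i. 2 * g (\<lambda>i. 0) i)" by (rule gh) simp
    hence "\<And>i. g (\<lambda>i. 0) i = 2 * g (\<lambda>i. 0) i" by (simp add: fun_eq_iff)
    thus ?thesis by (metis (no_types, lifting) ext add_cancel_right_right mult_2)
  qed
  have f0: "f (\<lambda>i. 0) = (\<lambda>i. 0)"
  proof -
    have "f (\<lambda>i. 2 * (\<lambda>i. 0) i) = (\<lambda>i. 2 * f (\<lambda>i. 0) i)" by (rule fh) simp
    hence "\<And>i. f (\<lambda>i. 0) i = 2 * f (\<lambda>i. 0) i" by (simp add: fun_eq_iff)
    thus ?thesis by (metis (no_types, lifting) ext add_cancel_right_right mult_2)
  qed
  define S where "S = {x\<in>U. (\<Sum>i\<in>I. x i ^ 2) = 1}"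
  define T where "T = {y::nat\<Rightarrow>real. (\<Sum>i\<le>d. y i ^ 2) = 1 \<and> (\<forall>i>d. y i = 0)}"
  define Nf where "Nf x = sqrt (\<Sum>i\<le>d. f x i ^ 2)" for x
  define Ng where "Ng y = sqrt (\<Sum>i\<in>I. g y i ^ 2)" for y
  define FF where "FF x = (\<lambda>i. f x i / Nf x)" for x
  define GG where "GG y = (\<lambda>i. g y i / Ng y)" for y
  have Nfpos: "Nf x > 0" if "x \<in> S" for x
  proof (rule ccontr)
    assume "\<not> Nf x > 0"
    hence "(\<Sum>i\<le>d. f x i ^ 2) = 0" unfolding Nf_def
      by (metis not_less real_sqrt_le_0_iff sum_nonneg zero_le_power2 order.antisym real_sqrt_eq_zero_cancel_iff)
    hence "\<forall>i\<in>{..d}. f x i ^ 2 = 0" by (subst (asm) sum_nonneg_eq_0_iff) auto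
    moreover have "\<forall>i>d. f x i = 0" using fW that S_def by auto
    ultimately have "f x = (\<lambda>i. 0)" by (auto simp: fun_eq_iff not_le[symmetric])
    hence "x = (\<lambda>i. 0)" using gf[of x] g0 that S_def by auto
    thus False using that S_def by simp
  qed
  have Ngpos: "Ng y > 0" if "y \<in> T" for y
  proof (rule ccontr)
    assume "\<not> Ng y > 0"
    hence "(\<Sum>i\<in>I. g y i ^ 2) = 0" unfolding Ng_def
      by (metis not_less real_sqrt_le_0_iff sum_nonneg zero_le_power2 order.antisym real_sqrt_eq_zero_cancel_iff)
    hence "\<forall>i\<in>I. g y i ^ 2 = 0" using fin by (subst (asm) sum_nonneg_eq_0_iff) auto
    moreover have "\<forall>i. i \<notin> I \<longrightarrow> g y i = 0" using Usupp gU that T_def by auto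
    ultimately have "g y = (\<lambda>i. 0)" by (auto simp: fun_eq_iff)
    hence "y = (\<lambda>i. 0)" using fg[of y] f0 that T_def by auto
    thus False using that T_def by simp
  qed
  have FFT: "FF x \<in> T" if "x \<in> S" for x
  proof -
    have "(\<Sum>i\<le>d. (f x i / Nf x) ^ 2) = (\<Sum>i\<le>d. f x i ^ 2) / (Nf x)^2"
      by (simp add: power_divide sum_divide_distrib)
    also have "(Nf x)^2 = (\<Sum>i\<le>d. f x i ^ 2)" unfolding Nf_def by (simp add: sum_nonneg)
    finally have "(\<Sum>i\<le>d. (f x i / Nf x) ^ 2) = 1" using Nfpos[OF that] Nf_def by auto
    thus ?thesis using fW that S_def unfolding T_def FF_def by auto
  qed
  have GGS: "GG y \<in> S" if "y \<in> T" for y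
  proof -
    have "(\<Sum>i\<in>I. (g y i / Ng y) ^ 2) = (\<Sum>i\<in>I. g y i ^ 2) / (Ng y)^2"
      by (simp add: power_divide sum_divide_distrib)
    also have "(Ng y)^2 = (\<Sum>i\<in>I. g y i ^ 2)" unfolding Ng_def by (simp add: sum_nonneg)
    finally have "(\<Sum>i\<in>I. (g y i / Ng y) ^ 2) = 1" using Ngpos[OF that] Ng_def by auto
    moreover have "GG y \<in> U"
      using Uc[OF gU[of y], of "1 / Ng y"] that T_def Ngpos[OF that] by (simp add: GG_def)
    ultimately show ?thesis unfolding S_def GG_def by auto
  qed
  have GF: "GG (FF x) = x" if "x \<in> S" for x
  proof -
    have xU: "x \<in> U" using that S_def by auto
    have c: "1 / Nf x > 0" using Nfpos[OF that] by simp
    have "FF x = f (\<lambda>i. (1 / Nf x) * x i)" unfolding FF_def by (subst fh[OF c]) auto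
    hence "g (FF x) = (\<lambda>i. (1 / Nf x) * x i)" using gf[OF Uc[OF xU c]] by simp
    moreover have "sqrt (\<Sum>i\<in>I. ((1 / Nf x) * x i) ^ 2) = 1 / Nf x"
    proof -
      have "(\<Sum>i\<in>I. ((1 / Nf x) * x i) ^ 2) = (1 / Nf x)^2 * (\<Sum>i\<in>I. x i ^ 2)"
        by (simp add: power_mult_distrib sum_distrib_left power_divide)
      thus ?thesis using that S_def c by simp
    qed
    ultimately show ?thesis using c unfolding GG_def Ng_def by (auto simp: fun_eq_iff)
  qed
  have FG: "FF (GG y) = y" if "y \<in> T" for y
  proof -
    have yW: "\<forall>i>d. y i = 0" using that T_def by auto
    have c: "1 / Ng y > 0" using Ngpos[OF that] by simp
    have "GG y = g (\<lambda>i. (1 / Ng y) * y i)" unfolding GG_def by (subst gh[OF c]) auto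
    hence "f (GG y) = (\<lambda>i. (1 / Ng y) * y i)" using fg[of "\<lambda>i. (1 / Ng y) * y i"] yW by simp
    moreover have "sqrt (\<Sum>i\<le>d. ((1 / Ng y) * y i) ^ 2) = 1 / Ng y"
    proof -
      have "(\<Sum>i\<le>d. ((1 / Ng y) * y i) ^ 2) = (1 / Ng y)^2 * (\<Sum>i\<le>d. y i ^ 2)"
        by (simp add: power_mult_distrib sum_distrib_left power_divide)
      thus ?thesis using that T_def c by simp
    qed
    ultimately show ?thesis using c unfolding FF_def Nf_def by (auto simp: fun_eq_iff)
  qed
  have cFF: "continuous_map (subtopology (powertop_real UNIV) S) (nsphere d) FF"
    unfolding nsphere T_def[symmetric]
  proof (rule continuous_map_into_subtopology)
    show "continuous_map (subtopology (powertop_real UNIV) S) (powertop_real UNIV) FF"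
      unfolding continuous_map_componentwise_UNIV FF_def Nf_def
      apply (intro allI continuous_intros continuous_map_from_subtopology cf)
      using Nfpos unfolding Nf_def by (auto, metis less_irrefl)
    show "FF \<in> topspace (subtopology (powertop_real UNIV) S) \<rightarrow> T" using FFT by auto
  qed
  have cGG: "continuous_map (nsphere d) (subtopology (powertop_real UNIV) S) GG"
    unfolding nsphere T_def[symmetric]
  proof (rule continuous_map_into_subtopology)
    show "continuous_map (subtopology (powertop_real UNIV) T) (powertop_real UNIV) GG"
      unfolding continuous_map_componentwise_UNIV GG_def Ng_def
      apply (intro allI continuous_intros continuous_map_from_subtopology cg fin)
      using Ngpos unfolding Ng_def by (auto, metis less_irrefl)
    show "GG \<in> topspace (subtopology (powertop_real UNIV) T) \<rightarrow> S" using GGS by auto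
  qed
  have "homeomorphic_maps (subtopology (powertop_real UNIV) S) (nsphere d) FF GG"
    unfolding homeomorphic_maps_def using cFF cGG GF FG
    by (auto simp: nsphere T_def[symmetric])
  thus ?thesis unfolding S_def[symmetric] homeomorphic_space_def by blast
qed




definition U2 :: "nat set \<Rightarrow> nat set \<Rightarrow> (nat \<Rightarrow> real) set" where
  "U2 I G = {x. (\<forall>i. i \<notin> I \<longrightarrow> x i = 0) \<and> sum x I = 0 \<and> (\<exists>c. \<forall>i\<in>G. x i = c)}"

lemma proj_cont: "continuous_map (powertop_real UNIV) euclideanreal (\<lambda>x. x k)"
  using continuous_map_product_projection[of k UNIV "\<lambda>_. euclideanreal"] by simp

lemma sum_const_on:
  assumes "\<forall>i\<in>G. x i = c"
  shows "sum x G = real (card G) * c"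
  using assms by simp

lemma case2_sphere:
  assumes fin: "finite I" and GI: "G \<subseteq> I" and Gne: "G \<noteq> {}" and m: "m = card (I - G)" "m > 0"
  shows "subtopology (powertop_real UNIV) {x\<in>U2 I G. (\<Sum>i\<in>I. x i ^ 2) = 1} homeomorphic_space nsphere (m - 1)"
proof -
  define R where "R = I - G"
  have finR: "finite R" using fin R_def by auto
  obtain e where e: "bij_betw e {0..<m} R" using ex_bij_betw_nat_finite[OF finR] m R_def by auto
  define e' where "e' = inv_into {0..<m} e"
  have ee': "e (e' j) = j" if "j \<in> R" for j using e that e'_def by (simp add: bij_betw_inv_into_right)
  have e'e: "e' (e i) = i" if "i < m" for i using e that e'_def by (simp add: bij_betw_inv_into_left)
  have e'lt: "e' j < m" if "j \<in> R" for j
    using e that e'_def bij_betw_inv_into[OF e] by (auto simp: bij_betw_def)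
  have eR: "e i \<in> R" if "i < m" for i using e that by (auto simp: bij_betw_def)
  have sumR: "sum x R = (\<Sum>i<m. x (e i))" for x :: "nat \<Rightarrow> real"
    using sum.reindex_bij_betw[OF e, of x] by (simp add: atLeast0LessThan)
  have finG: "finite G" using fin GI finite_subset by auto
  have cG: "real (card G) > 0" using finG Gne by (simp add: card_gt_0_iff)
  have sumI: "sum x I = sum x R + sum x G" for x :: "nat \<Rightarrow> real"
    using sum.subset_diff[OF GI fin, of x] R_def by simp
  define f where "f x = (\<lambda>i. if i < m then x (e i) else 0)" for x :: "nat \<Rightarrow> real"
  define g where "g y = (\<lambda>j. if j \<in> R then y (e' j) else if j \<in> G then - (\<Sum>i<m. y i) / real (card G) else 0)"
    for y :: "nat \<Rightarrow> real"
  show ?thesis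
  proof (rule sphere_homeo[where f = f and g = g])
    show "finite I" by fact
    show "continuous_map (powertop_real UNIV) euclideanreal (\<lambda>x. f x i)" for i
      unfolding f_def by (cases "i < m") (auto intro: continuous_map_product_projection)
    show "continuous_map (powertop_real UNIV) euclideanreal (\<lambda>x. g x i)" for i
    proof (cases "i \<in> R")
      case True thus ?thesis by (simp add: g_def proj_cont)
    next
      case False
      show ?thesis
      proof (cases "i \<in> G")
        case True
        have "continuous_map (powertop_real UNIV) euclideanreal (\<lambda>x. - (\<Sum>i<m. x i) / real (card G))"
          by (intro continuous_map_real_divide continuous_map_minus continuous_map_sum
              proj_cont continuous_map_canonical_const) (use cG in auto)
        thus ?thesis using False True by (simp add: g_def)
      qed (use False in \<open>simp add: g_def\<close>)
    qed
    show "f (\<lambda>i. c * x i) = (\<lambda>i. c * f x i)" for x c by (auto simp: f_def)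
    show "g (\<lambda>i. c * x i) = (\<lambda>i. c * g x i)" for x c by (auto simp: g_def sum_distrib_left)
    show "(\<lambda>i. c * x i) \<in> U2 I G" if "x \<in> U2 I G" for x c
      using that by (auto simp: U2_def sum_distrib_left[symmetric])
    show "x i = 0" if "x \<in> U2 I G" "i \<notin> I" for x i using that by (auto simp: U2_def)
    show "f x i = 0" if "m - 1 < i" for x i using that by (auto simp: f_def)
    show "g (f x) = x" if x: "x \<in> U2 I G" for x
    proof
      fix j
      show "g (f x) j = x j"
      proof (cases "j \<in> R")
        case True thus ?thesis using ee' e'lt by (simp add: g_def f_def)
      next
        case nR: False
        show ?thesis
        proof (cases "j \<in> G")
          case True
          obtain c where c: "\<forall>i\<in>G. x i = c" using x by (auto simp: U2_def)
          have "sum x I = 0" using x by (auto simp: U2_def)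
          hence "sum x R + real (card G) * x j = 0"
            using sumI sum_const_on[OF c] c True by auto
          moreover have "(\<Sum>i<m. f x i) = sum x R" by (simp add: f_def sumR)
          ultimately show ?thesis using nR True cG by (auto simp: g_def field_simps)
        next
          case False
          hence "j \<notin> I" using nR R_def by auto
          thus ?thesis using nR False x by (auto simp: g_def U2_def)
        qed
      qed
    qed
    show "g y \<in> U2 I G" if "\<forall>i>m - 1. y i = 0" for y
    proof -
      have "\<forall>i. i \<notin> I \<longrightarrow> g y i = 0" using R_def GI by (auto simp: g_def)
      moreover have "sum (g y) R = (\<Sum>i<m. y i)"
        unfolding sumR by (rule sum.cong) (auto simp: g_def e'e eR)
      moreover have "sum (g y) G = - (\<Sum>i<m. y i)"
      proof -
        have "sum (g y) G = (\<Sum>j\<in>G. - (\<Sum>i<m. y i) / real (card G))"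
          by (rule sum.cong) (auto simp: g_def R_def)
        thus ?thesis using cG by simp
      qed
      moreover have "\<exists>c. \<forall>i\<in>G. g y i = c" by (auto simp: g_def R_def)
      ultimately show ?thesis unfolding U2_def using sumI[of "g y"] by auto
    qed
    show "f (g y) = y" if "\<forall>i>m - 1. y i = 0" for y
    proof
      fix i show "f (g y) i = y i"
        using that m(2) by (cases "i < m") (auto simp: f_def g_def eR e'e)
    qed
  qed
qed




definition U1 :: "nat set \<Rightarrow> nat set \<Rightarrow> nat set \<Rightarrow> (nat \<Rightarrow> real) set" where
  "U1 I F F' = {x. (\<forall>i. i \<notin> I \<longrightarrow> x i = 0) \<and> sum x I = 0 \<and> (\<exists>c. \<forall>i\<in>F. x i = c) \<and> (\<exists>c. \<forall>i\<in>F'. x i = c)}"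

lemma case1_sphere:
  assumes fin: "finite I" and FI: "F \<subseteq> I" and FI': "F' \<subseteq> I" and disj: "F \<inter> F' = {}"
    and Fne: "F \<noteq> {}" and Fne': "F' \<noteq> {}" and m: "m = card (I - F - F')"
  shows "subtopology (powertop_real UNIV) {x\<in>U1 I F F'. (\<Sum>i\<in>I. x i ^ 2) = 1} homeomorphic_space nsphere m"
proof -
  define R where "R = I - F - F'"
  have finR: "finite R" using fin R_def by auto
  obtain e where e: "bij_betw e {0..<m} R" using ex_bij_betw_nat_finite[OF finR] m R_def by auto
  define e' where "e' = inv_into {0..<m} e"
  have ee': "e (e' j) = j" if "j \<in> R" for j using e that e'_def by (simp add: bij_betw_inv_into_right)
  have e'e: "e' (e i) = i" if "i < m" for i using e that e'_def by (simp add: bij_betw_inv_into_left)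
  have e'lt: "e' j < m" if "j \<in> R" for j
    using e that e'_def bij_betw_inv_into[OF e] by (auto simp: bij_betw_def)
  have eR: "e i \<in> R" if "i < m" for i using e that by (auto simp: bij_betw_def)
  have sumR: "sum x R = (\<Sum>i<m. x (e i))" for x :: "nat \<Rightarrow> real"
    using sum.reindex_bij_betw[OF e, of x] by (simp add: atLeast0LessThan)
  have finF: "finite F" using fin FI finite_subset by auto
  have finF': "finite F'" using fin FI' finite_subset by auto
  have cF: "real (card F) > 0" using finF Fne by (simp add: card_gt_0_iff)
  obtain p where p: "p \<in> F'" using Fne' by auto
  have sumI: "sum x I = sum x R + sum x F + sum x F'" for x :: "nat \<Rightarrow> real"
  proof -
    have "sum x I = sum x R + sum x (F \<union> F')"
      using sum.subset_diff[of "F \<union> F'" I x] FI FI' fin R_def by (simp add: Diff_Un Int_commute Diff_Int2 set_diff_eq) 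
    also have "sum x (F \<union> F') = sum x F + sum x F'" using sum.union_disjoint[OF finF finF' disj] .
    finally show ?thesis by simp
  qed
  define f where "f x = (\<lambda>i. if i < m then x (e i) else if i = m then x p else 0)" for x :: "nat \<Rightarrow> real"
  define g where "g y = (\<lambda>j. if j \<in> R then y (e' j) else if j \<in> F' then y m
      else if j \<in> F then - (real (card F') * y m + (\<Sum>i<m. y i)) / real (card F) else 0)"
    for y :: "nat \<Rightarrow> real"
  have pR: "p \<notin> R" "p \<notin> F" using p disj R_def by auto
  show ?thesis
  proof (rule sphere_homeo[where f = f and g = g])
    show "finite I" by fact
    show "continuous_map (powertop_real UNIV) euclideanreal (\<lambda>x. f x i)" for i
      unfolding f_def by (cases "i < m"; cases "i = m") (auto simp: proj_cont)
    show "continuous_map (powertop_real UNIV) euclideanreal (\<lambda>x. g x i)" for i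
    proof (cases "i \<in> R")
      case True thus ?thesis by (simp add: g_def proj_cont)
    next
      case False
      show ?thesis
      proof (cases "i \<in> F'")
        case True thus ?thesis using False by (simp add: g_def proj_cont)
      next
        case nF': False
        show ?thesis
        proof (cases "i \<in> F")
          case True
          have "continuous_map (powertop_real UNIV) euclideanreal
              (\<lambda>x. - (real (card F') * x m + (\<Sum>i<m. x i)) / real (card F))"
            by (intro continuous_map_real_divide continuous_map_minus continuous_map_sum continuous_map_add
                continuous_map_real_mult proj_cont continuous_map_canonical_const) (use cF in auto)
          thus ?thesis using False nF' True by (simp add: g_def)
        qed (use False nF' in \<open>simp add: g_def\<close>)
      qed
    qed
    show "f (\<lambda>i. c * x i) = (\<lambda>i. c * f x i)" for x c by (auto simp: f_def)
    show "g (\<lambda>i. c * x i) = (\<lambda>i. c * g x i)" for x c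
      by (auto simp: g_def fun_eq_iff sum_distrib_left[symmetric] field_simps)
    show "(\<lambda>i. c * x i) \<in> U1 I F F'" if "x \<in> U1 I F F'" for x c
      using that by (auto simp: U1_def sum_distrib_left[symmetric])
    show "x i = 0" if "x \<in> U1 I F F'" "i \<notin> I" for x i using that by (auto simp: U1_def)
    show "f x i = 0" if "m < i" for x i using that by (auto simp: f_def)
    show "g (f x) = x" if x: "x \<in> U1 I F F'" for x
    proof
      fix j
      obtain c where c: "\<forall>i\<in>F. x i = c" using x by (auto simp: U1_def)
      obtain c' where c': "\<forall>i\<in>F'. x i = c'" using x by (auto simp: U1_def)
      show "g (f x) j = x j"
      proof (cases "j \<in> R")
        case True thus ?thesis using ee' e'lt by (simp add: g_def f_def)
      next
        case nR: False
        show ?thesis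
        proof (cases "j \<in> F'")
          case True thus ?thesis using nR c' p by (simp add: g_def f_def)
        next
          case nF': False
          show ?thesis
          proof (cases "j \<in> F")
            case True
            have "sum x I = 0" using x by (auto simp: U1_def)
            hence "sum x R + real (card F) * c + real (card F') * c' = 0"
              using sumI sum_const_on[OF c] sum_const_on[OF c'] by auto
            moreover have "(\<Sum>i<m. f x i) = sum x R" by (simp add: f_def sumR)
            moreover have "f x m = c'" using c' p by (simp add: f_def)
            ultimately show ?thesis using nR nF' True cF c by (auto simp: g_def field_simps)
          next
            case False
            hence "j \<notin> I" using nR nF' R_def by auto
            thus ?thesis using nR nF' False x by (auto simp: g_def U1_def)
          qed
        qed
      qed
    qed
    show "g y \<in> U1 I F F'" if "\<forall>i>m. y i = 0" for y
    proof -
      have "\<forall>i. i \<notin> I \<longrightarrow> g y i = 0" using R_def FI FI' by (auto simp: g_def)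
      moreover have "sum (g y) R = (\<Sum>i<m. y i)"
        unfolding sumR by (rule sum.cong) (auto simp: g_def e'e eR)
      moreover have "sum (g y) F' = real (card F') * y m"
      proof -
        have "sum (g y) F' = (\<Sum>j\<in>F'. y m)"
          by (rule sum.cong) (auto simp: g_def R_def)
        thus ?thesis by simp
      qed
      moreover have "sum (g y) F = - (real (card F') * y m + (\<Sum>i<m. y i))"
      proof -
        have "sum (g y) F = (\<Sum>j\<in>F. - (real (card F') * y m + (\<Sum>i<m. y i)) / real (card F))"
          by (rule sum.cong) (use disj in \<open>auto simp: g_def R_def\<close>)
        thus ?thesis using cF by simp
      qed
      moreover have "\<exists>c. \<forall>i\<in>F. g y i = c" using disj by (auto simp: g_def R_def)
      moreover have "\<exists>c. \<forall>i\<in>F'. g y i = c" by (auto simp: g_def R_def)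
      ultimately show ?thesis unfolding U1_def using sumI[of "g y"] by auto
    qed
    show "f (g y) = y" if "\<forall>i>m. y i = 0" for y
    proof
      fix i show "f (g y) i = y i"
        using that p pR by (cases "i < m"; cases "i = m") (auto simp: f_def g_def eR e'e)
    qed
  qed
qed

lemma case2_empty:
  assumes fin: "finite I" and "I \<noteq> {}"
  shows "{x\<in>U2 I I. (\<Sum>i\<in>I. x i ^ 2) = 1} = {}"
proof -
  have "x \<notin> U2 I I" if "(\<Sum>i\<in>I. x i ^ 2) = 1" for x
  proof
    assume "x \<in> U2 I I"
    then obtain c where c: "\<forall>i\<in>I. x i = c" and s: "sum x I = 0"
      unfolding U2_def mem_Collect_eq by blast
    hence "real (card I) * c = 0" using sum_const_on[OF c] by simp
    hence "c = 0" using assms by simp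
    hence "(\<Sum>i\<in>I. x i ^ 2) = 0" using c by simp
    thus False using that by simp
  qed
  thus ?thesis by auto
qed




lemma level_face:
  fixes x :: "nat \<Rightarrow> real"
  assumes supp: "\<forall>i. i \<notin> {1..n} \<longrightarrow> x i = 0" and s: "(\<Sum>i\<in>{1..n}. x i) = 0"
    and sq: "(\<Sum>i\<in>{1..n}. x i ^ 2) = 1"
    and FE: "F \<in> E" and FI: "F \<subseteq> {1..n}" "F \<noteq> {}" and cF: "\<exists>c. \<forall>i\<in>F. x i = c"
    and FI': "F' \<subseteq> {1..n}" "F' \<noteq> {}" and cF': "\<exists>c. \<forall>i\<in>F'. x i = c"
  shows "x \<in> realization n (edge_sphere n E F \<inter> edge_sphere n E F')"
proof -
  define I where "I = {1..n::nat}"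
  define vs where "vs = sorted_list_of_set (x ` I)"
  define bs where "bs = map (\<lambda>v. {i\<in>I. x i = v}) vs"
  have fin: "finite (x ` I)" by (simp add: I_def)
  have setvs: "set vs = x ` I" using fin vs_def by simp
  have strict: "sorted_wrt (<) vs" using vs_def by (simp add: strict_sorted_list_of_set)
  have dist: "distinct vs" using vs_def by simp
  have lbs: "length bs = length vs" by (simp add: bs_def)
  have bsk: "bs ! k = {i\<in>I. x i = vs ! k}" if "k < length bs" for k using that by (simp add: bs_def)
  have blk: "\<exists>B\<in>set bs. A \<subseteq> B" if hA: "A \<subseteq> I" "A \<noteq> {}" "\<exists>c. \<forall>i\<in>A. x i = c" for A
  proof -
    obtain c where c: "\<forall>i\<in>A. x i = c" using hA by blast
    obtain a where a: "a \<in> A" using hA by blast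
    have "x a \<in> set vs" using a hA setvs by auto
    hence "{i\<in>I. x i = x a} \<in> set bs" by (simp add: bs_def)
    moreover have "A \<subseteq> {i\<in>I. x i = x a}" using hA c a by auto
    ultimately show ?thesis by blast
  qed
  have osp: "ordered_set_partition n bs"
    unfolding ordered_set_partition_def
  proof (intro conjI ballI allI impI)
    fix B assume "B \<in> set bs"
    then obtain v where "v \<in> set vs" "B = {i\<in>I. x i = v}" by (auto simp: bs_def)
    thus "B \<noteq> {}" using setvs by auto
  next
    fix i j assume ij: "i < length bs" "j < length bs" "i \<noteq> j"
    hence "vs ! i \<noteq> vs ! j" using dist lbs by (simp add: nth_eq_iff_index_eq)
    thus "bs ! i \<inter> bs ! j = {}" using bsk ij by auto
  next
    show "\<Union> (set bs) = {1..n}"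
      using setvs by (auto simp: bs_def I_def)
  qed
  have "bs \<in> edge_sphere n E F \<inter> edge_sphere n E F'"
    using osp blk[of F] blk[of F'] FI FI' cF cF' FE I_def
    unfolding edge_sphere_def coloring_complex_def by blast
  moreover have "x \<in> face_cell n bs"
    unfolding face_cell_def
  proof (intro CollectI conjI allI impI ballI)
    show "x i = 0" if "i \<notin> {1..n}" for i using supp that by blast
    show "(\<Sum>i\<in>{1..n}. x i) = 0" by fact
    show "(\<Sum>i\<in>{1..n}. x i ^ 2) = 1" by fact
    show "x i = x j" if "k < length bs" "i \<in> bs ! k" "j \<in> bs ! k" for k i j
      using that bsk by auto
    show "x i < x j" if "k < length bs" "l < length bs" "k < l" "i \<in> bs ! k" "j \<in> bs ! l" for k l i j
    proof -
      have "vs ! k < vs ! l" using sorted_wrt_nth_less[OF strict, of k l] that lbs by simp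
      thus ?thesis using that bsk by auto
    qed
  qed
  ultimately show ?thesis unfolding realization_def by blast
qed

lemma cell_const:
  assumes "x \<in> face_cell n bs" "B \<in> set bs" "A \<subseteq> B"
  shows "\<exists>c. \<forall>i\<in>A. x i = c"
proof -
  obtain k where k: "k < length bs" "bs ! k = B" using assms by (auto simp: in_set_conv_nth)
  have "\<forall>i\<in>bs ! k. \<forall>j\<in>bs ! k. x i = x j" using assms(1) k unfolding face_cell_def by blast
  show ?thesis
  proof (cases "A = {}")
    case False
    then obtain a where "a \<in> A" by blast
    hence "\<forall>i\<in>A. x i = x a" using \<open>\<forall>i\<in>bs ! k. \<forall>j\<in>bs ! k. x i = x j\<close> k assms(3) by blast
    thus ?thesis by blast
  qed simp
qed

lemma osp_same_block:
  assumes "ordered_set_partition n bs" "B \<in> set bs" "B' \<in> set bs" "a \<in> B" "a \<in> B'"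
  shows "B = B'"
proof -
  obtain k where k: "k < length bs" "bs ! k = B" using assms by (auto simp: in_set_conv_nth)
  obtain l where l: "l < length bs" "bs ! l = B'" using assms by (auto simp: in_set_conv_nth)
  show ?thesis
  proof (rule ccontr)
    assume "B \<noteq> B'"
    hence "k \<noteq> l" using k l by auto
    hence "bs ! k \<inter> bs ! l = {}" using assms(1) k l unfolding ordered_set_partition_def by blast
    thus False using k l assms by auto
  qed
qed

lemma realization_sub:
  assumes "x \<in> realization n (edge_sphere n E F \<inter> edge_sphere n E F')"
  shows "(\<forall>i. i \<notin> {1..n} \<longrightarrow> x i = 0) \<and> (\<Sum>i\<in>{1..n}. x i) = 0 \<and> (\<Sum>i\<in>{1..n}. x i ^ 2) = 1
    \<and> (\<exists>c. \<forall>i\<in>F. x i = c) \<and> (\<exists>c. \<forall>i\<in>F'. x i = c)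
    \<and> (F \<inter> F' \<noteq> {} \<longrightarrow> (\<exists>c. \<forall>i\<in>F \<union> F'. x i = c))"
proof -
  obtain bs where bs: "bs \<in> edge_sphere n E F" "bs \<in> edge_sphere n E F'" "x \<in> face_cell n bs"
    using assms unfolding realization_def by blast
  obtain B where B: "B \<in> set bs" "F \<subseteq> B" using bs(1) unfolding edge_sphere_def by blast
  obtain B' where B': "B' \<in> set bs" "F' \<subseteq> B'" using bs(2) unfolding edge_sphere_def by blast
  have osp: "ordered_set_partition n bs" using bs(1) unfolding edge_sphere_def coloring_complex_def by blast
  have "F \<inter> F' \<noteq> {} \<longrightarrow> (\<exists>c. \<forall>i\<in>F \<union> F'. x i = c)"
  proof
    assume "F \<inter> F' \<noteq> {}"
    then obtain a where "a \<in> F" "a \<in> F'" by blast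
    hence "B = B'" using osp_same_block[OF osp B(1) B'(1)] B B' by blast
    thus "\<exists>c. \<forall>i\<in>F \<union> F'. x i = c" using cell_const[OF bs(3) B(1), of "F \<union> F'"] B B' by blast
  qed
  moreover have "(\<forall>i. i \<notin> {1..n} \<longrightarrow> x i = 0) \<and> (\<Sum>i\<in>{1..n}. x i) = 0 \<and> (\<Sum>i\<in>{1..n}. x i ^ 2) = 1"
    using bs(3) unfolding face_cell_def by blast
  ultimately show ?thesis using cell_const[OF bs(3) B(1) B(2)] cell_const[OF bs(3) B'(1) B'(2)] by blast
qed

lemma two_block:
  assumes "A \<subseteq> {1..n}" "A \<noteq> {}" "A \<noteq> {1..n}"
  shows "ordered_set_partition n [A, {1..n} - A]"
  using assms unfolding ordered_set_partition_def
  by (auto simp: less_Suc_eq nth_Cons split: nat.splits)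




theorem mainTheorem12:
  fixes n :: nat and E :: "nat set set" and F F' :: "nat set"
  assumes "hypergraph n E" and "F \<in> E" and "F' \<in> E" and "F \<noteq> F'"
  shows "(F \<inter> F' = {} \<longrightarrow>
            is_sphere_of_dim
              (realization n (edge_sphere n E F \<inter> edge_sphere n E F'))
              (int n - int (card F) - int (card F')))
       \<and> (F \<inter> F' \<noteq> {} \<longrightarrow>
            is_sphere_of_dim
              (realization n (edge_sphere n E F \<inter> edge_sphere n E F'))
              (int n - int (card (F \<union> F')) - 1))
       \<and> ((\<forall>bs \<in> edge_sphere n E F \<inter> edge_sphere n E F'. length bs \<le> 1)
            \<longleftrightarrow> (F \<union> F' = {1..n} \<and> F \<inter> F' \<noteq> {}))"
proof -
  define I where "I = {1..n}"
  have finI: "finite I" by (simp add: I_def)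
  have FI: "F \<subseteq> I" "F \<noteq> {}" and FI': "F' \<subseteq> I" "F' \<noteq> {}"
    using assms unfolding hypergraph_def I_def by auto
  have finF: "finite F" "finite F'" using FI FI' finI finite_subset by auto
  have cardI: "card I = n" by (simp add: I_def)
  let ?R = "realization n (edge_sphere n E F \<inter> edge_sphere n E F')"
  have P1: "F \<inter> F' = {} \<longrightarrow> is_sphere_of_dim ?R (int n - int (card F) - int (card F'))"
  proof
    assume disj: "F \<inter> F' = {}"
    have eq: "?R = {x\<in>U1 I F F'. (\<Sum>i\<in>I. x i ^ 2) = 1}"
    proof
      show "?R \<subseteq> {x\<in>U1 I F F'. (\<Sum>i\<in>I. x i ^ 2) = 1}"
        using realization_sub[of _ n E F F'] unfolding U1_def I_def by blast
      show "{x\<in>U1 I F F'. (\<Sum>i\<in>I. x i ^ 2) = 1} \<subseteq> ?R"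
      proof
        fix x assume "x \<in> {x\<in>U1 I F F'. (\<Sum>i\<in>I. x i ^ 2) = 1}"
        thus "x \<in> ?R" using level_face[of n x F E F'] assms(2) FI FI' unfolding U1_def I_def by blast
      qed
    qed
    define m where "m = card (I - F - F')"
    have "card (I - (F \<union> F')) = card I - card (F \<union> F')"
      using FI FI' finI by (intro card_Diff_subset) (auto intro: finite_subset)
    moreover have "card (F \<union> F') = card F + card F'" using card_Un_disjoint[OF finF disj] .
    moreover have "card (F \<union> F') \<le> card I" using FI FI' finI by (intro card_mono) auto
    ultimately have "int m = int n - int (card F) - int (card F')"
      unfolding m_def cardI[symmetric] by (simp add: Diff_Un set_diff_eq)
    moreover have "subtopology (powertop_real UNIV) ?R homeomorphic_space nsphere m"
      unfolding eq using case1_sphere[OF finI FI(1) FI'(1) disj FI(2) FI'(2) m_def] .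
    ultimately show "is_sphere_of_dim ?R (int n - int (card F) - int (card F'))"
      unfolding is_sphere_of_dim_def by (metis nat_int of_nat_0_le_iff)
  qed
  have P2: "F \<inter> F' \<noteq> {} \<longrightarrow> is_sphere_of_dim ?R (int n - int (card (F \<union> F')) - 1)"
  proof
    assume inter: "F \<inter> F' \<noteq> {}"
    define G where "G = F \<union> F'"
    have GI: "G \<subseteq> I" "G \<noteq> {}" using FI FI' G_def by auto
    have eq: "?R = {x\<in>U2 I G. (\<Sum>i\<in>I. x i ^ 2) = 1}"
    proof
      show "?R \<subseteq> {x\<in>U2 I G. (\<Sum>i\<in>I. x i ^ 2) = 1}"
        using realization_sub[of _ n E F F'] inter unfolding U2_def I_def G_def by blast
      show "{x\<in>U2 I G. (\<Sum>i\<in>I. x i ^ 2) = 1} \<subseteq> ?R"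
      proof
        fix x assume x: "x \<in> {x\<in>U2 I G. (\<Sum>i\<in>I. x i ^ 2) = 1}"
        then obtain c where c: "\<forall>i\<in>G. x i = c" unfolding U2_def by blast
        have "\<exists>c. \<forall>i\<in>F. x i = c" "\<exists>c. \<forall>i\<in>F'. x i = c" using c G_def by auto
        thus "x \<in> ?R" using x level_face[of n x F E F'] assms(2) FI FI' unfolding U2_def I_def by blast
      qed
    qed
    define m where "m = card (I - G)"
    have cm: "card (I - G) = card I - card G"
      using GI finI by (intro card_Diff_subset) (auto intro: finite_subset)
    have cGI: "card G \<le> card I" using GI finI by (intro card_mono) auto
    show "is_sphere_of_dim ?R (int n - int (card (F \<union> F')) - 1)"
    proof (cases "m = 0")
      case True
      hence "I - G = {}" using finI m_def by simp
      hence "G = I" using GI by auto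
      hence "?R = {}" using eq case2_empty[OF finI] GI by auto
      moreover have "int n - int (card (F \<union> F')) - 1 = -1" using \<open>G = I\<close> cardI G_def by simp
      ultimately show ?thesis unfolding is_sphere_of_dim_def by simp
    next
      case False
      hence "int n - int (card (F \<union> F')) - 1 = int (m - 1)"
        using cm cGI cardI m_def G_def by simp
      moreover have "subtopology (powertop_real UNIV) ?R homeomorphic_space nsphere (m - 1)"
        unfolding eq using case2_sphere[OF finI GI m_def] False by simp
      ultimately show ?thesis unfolding is_sphere_of_dim_def by (metis nat_int of_nat_0_le_iff)
    qed
  qed
  have P3: "(\<forall>bs \<in> edge_sphere n E F \<inter> edge_sphere n E F'. length bs \<le> 1)
            \<longleftrightarrow> (F \<union> F' = {1..n} \<and> F \<inter> F' \<noteq> {})"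
  proof
    assume all: "\<forall>bs \<in> edge_sphere n E F \<inter> edge_sphere n E F'. length bs \<le> 1"
    show "F \<union> F' = {1..n} \<and> F \<inter> F' \<noteq> {}"
    proof (rule ccontr)
      assume neg: "\<not> (F \<union> F' = {1..n} \<and> F \<inter> F' \<noteq> {})"
      define A where "A = (if F \<inter> F' = {} then F else F \<union> F')"
      have AI: "A \<subseteq> I" "A \<noteq> {}" using FI FI' A_def by auto
      have AnI: "A \<noteq> I"
      proof (cases "F \<inter> F' = {}")
        case True thus ?thesis using A_def FI' by auto
      next
        case False thus ?thesis using A_def neg I_def by auto
      qed
      have osp: "ordered_set_partition n [A, I - A]" using two_block[of A n] AI AnI I_def by simp
      have "F \<subseteq> A" using A_def by auto
      moreover have "F' \<subseteq> A \<or> F' \<subseteq> I - A" using A_def FI' by auto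
      ultimately have "[A, I - A] \<in> edge_sphere n E F \<inter> edge_sphere n E F'"
        using osp assms(2) unfolding edge_sphere_def coloring_complex_def by auto
      from bspec[OF all this] show False by simp
    qed
  next
    assume h: "F \<union> F' = {1..n} \<and> F \<inter> F' \<noteq> {}"
    show "\<forall>bs \<in> edge_sphere n E F \<inter> edge_sphere n E F'. length bs \<le> 1"
    proof (intro ballI, rule ccontr)
      fix bs assume bs: "bs \<in> edge_sphere n E F \<inter> edge_sphere n E F'" and len: "\<not> length bs \<le> 1"
      obtain B where B: "B \<in> set bs" "F \<subseteq> B" using bs unfolding edge_sphere_def by blast
      obtain B' where B': "B' \<in> set bs" "F' \<subseteq> B'" using bs unfolding edge_sphere_def by blast
      have osp: "ordered_set_partition n bs" using bs unfolding edge_sphere_def coloring_complex_def by blast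
      obtain a where "a \<in> F" "a \<in> F'" using h by blast
      hence "B = B'" using osp_same_block[OF osp B(1) B'(1)] B B' by blast
      hence BI: "I \<subseteq> B" using B B' h I_def by auto
      obtain k where k: "k < length bs" "bs ! k = B" using B by (auto simp: in_set_conv_nth)
      define j where "j = (if k = 0 then 1 else (0::nat))"
      have j: "j < length bs" "j \<noteq> k" using len k unfolding j_def by auto
      have ne: "bs ! j \<noteq> {}" using osp j unfolding ordered_set_partition_def by auto
      have "bs ! j \<subseteq> I" using osp j unfolding ordered_set_partition_def I_def by auto
      moreover have "bs ! j \<inter> bs ! k = {}" using osp j k unfolding ordered_set_partition_def by blast
      ultimately show False using ne BI k by auto
    qed
  qed
  show ?thesis using P1 P2 P3 by blast
qed


end
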